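(* Let $V$ be a $5$-dimensional complex vector space and $H_1,H_2\subset\Lambda^2V$ hyperplanes such that every nonzero linear combination of their equations, viewed as a skew-symmetric form on $V$, has rank $4$. Then for every hyperplane $V_4\subset V$ the space $M(V_4)=\Lambda^2V_4\cap H_1\cap H_2$ has dimension $4$.
   Context: The hypothesis on the ranks is equivalent to smoothness of $G(2,V)\cap P(H_1\cap H_2)$ in the Plücker embedding. *)

theory Defs
  imports "HOL-Analysis.Analysis"
begin

text \<open>V = complex^5. Bivectors (elements of Lambda^2 V) are represented as
  skew-symmetric 5x5 arrays, stored as vectors indexed by pairs, so that the
  library's generic linear algebra (vec.span, vec.dim over the field complex) applies.\<close>

type_synonym bivec = "complex ^ (5 \<times> 5)"

definition wedge :: "complex^5 \<Rightarrow> complex^5 \<Rightarrow> bivec" where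
  "wedge v w = (\<chi> p. v$(fst p) * w$(snd p) - w$(fst p) * v$(snd p))"

definition Lambda2 :: "(complex^5) set \<Rightarrow> bivec set" where
  "Lambda2 U = vec.span {wedge v w | v w. v \<in> U \<and> w \<in> U}"

text \<open>A skew-symmetric bilinear form on V, given by a skew-symmetric matrix A
  (omega(v,w) = v^T A w), viewed as a linear functional on Lambda^2 V:
  pairing A (v wedge w) = omega(v,w).\<close>
definition skew :: "complex^5^5 \<Rightarrow> bool" where
  "skew A \<longleftrightarrow> transpose A = - A"

definition pairing :: "complex^5^5 \<Rightarrow> bivec \<Rightarrow> complex" where
  "pairing A X = (\<Sum>i\<in>UNIV. \<Sum>j\<in>UNIV. A$i$j * X$(i,j)) / 2"

definition hyperplane_of :: "complex^5^5 \<Rightarrow> bivec set" where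
  "hyperplane_of A = {X \<in> Lambda2 UNIV. pairing A X = 0}"

definition lincomb :: "complex \<Rightarrow> complex^5^5 \<Rightarrow> complex \<Rightarrow> complex^5^5 \<Rightarrow> complex^5^5" where
  "lincomb a A b B = (\<chi> i j. a * A$i$j + b * B$i$j)"

end

theory Submission
  imports Defs
begin



lemma pairing_add: "pairing A (X + Y) = pairing A X + pairing A Y"
  unfolding pairing_def by (simp add: distrib_left sum.distrib add_divide_distrib)

lemma pairing_scale: "pairing A (c *s X) = c * pairing A X"
  unfolding pairing_def by (simp add: sum_distrib_left algebra_simps)

lemma pairing_lincomb: "pairing (lincomb a A b B) X = a * pairing A X + b * pairing B X"
  unfolding pairing_def lincomb_def
  by (simp add: sum_distrib_left sum.distrib algebra_simps add_divide_distrib)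


lemma skew_entry: assumes "skew A" shows "A$j$i = - A$i$j"
proof -
  have "(transpose A)$i$j = (-A)$i$j" using assms unfolding skew_def by simp
  then show ?thesis by (simp add: transpose_def)
qed

lemma skew_lincomb: assumes "skew A" "skew B" shows "skew (lincomb a A b B)"
  unfolding skew_def
proof (rule vec_eq_iff[THEN iffD2], rule allI, rule vec_eq_iff[THEN iffD2], rule allI)
  fix i j
  have e: "A$j$i = - A$i$j" "B$j$i = - B$i$j" using skew_entry assms by blast+
  have "transpose (lincomb a A b B) $ i $ j = a * A$j$i + b * B$j$i"
    by (simp add: transpose_def lincomb_def)
  also have "\<dots> = (- lincomb a A b B) $ i $ j" unfolding e by (simp add: lincomb_def)
  finally show "transpose (lincomb a A b B) $ i $ j = (- lincomb a A b B) $ i $ j" .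
qed

lemma pairing_wedge:
  assumes "skew A"
  shows "pairing A (wedge v w) = (\<Sum>i\<in>UNIV. \<Sum>j\<in>UNIV. v$i * A$i$j * w$j)"
proof -
  have "(\<Sum>i\<in>UNIV. \<Sum>j\<in>UNIV. A$i$j * (w$i * v$j)) = (\<Sum>i\<in>UNIV. \<Sum>j\<in>UNIV. A$j$i * (w$j * v$i))"
    by (rule sum.swap)
  also have "\<dots> = (\<Sum>i\<in>UNIV. \<Sum>j\<in>UNIV. - (v$i * A$i$j * w$j))"
  proof (rule sum.cong[OF refl], rule sum.cong[OF refl])
    fix i j
    have e: "A$j$i = - A$i$j" by (rule skew_entry[OF assms])
    show "A$j$i * (w$j * v$i) = - (v$i * A$i$j * w$j)" unfolding e by (simp add: mult_ac)
  qed
  also have "\<dots> = - (\<Sum>i\<in>UNIV. \<Sum>j\<in>UNIV. v$i * A$i$j * w$j)"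
    by (simp add: sum_negf)
  finally have e: "(\<Sum>i\<in>UNIV. \<Sum>j\<in>UNIV. A$i$j * (w$i * v$j)) = - (\<Sum>i\<in>UNIV. \<Sum>j\<in>UNIV. v$i * A$i$j * w$j)" .
  have "pairing A (wedge v w) = ((\<Sum>i\<in>UNIV. \<Sum>j\<in>UNIV. A$i$j * (v$i * w$j)) - (\<Sum>i\<in>UNIV. \<Sum>j\<in>UNIV. A$i$j * (w$i * v$j))) / 2"
    unfolding pairing_def wedge_def by (simp add: right_diff_distrib sum_subtractf)
  also have "(\<Sum>i\<in>UNIV. \<Sum>j\<in>UNIV. A$i$j * (v$i * w$j)) = (\<Sum>i\<in>UNIV. \<Sum>j\<in>UNIV. v$i * A$i$j * w$j)"
    by (simp add: mult_ac)
  finally show ?thesis unfolding e by simp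
qed

lemma wedge_add1: "wedge (x + y) w = wedge x w + wedge y w"
  unfolding wedge_def by (simp add: vec_eq_iff algebra_simps)
lemma wedge_scale1: "wedge (c *s x) w = c *s wedge x w"
  unfolding wedge_def by (simp add: vec_eq_iff algebra_simps)
lemma wedge_zero1: "wedge 0 w = 0"
  unfolding wedge_def by (simp add: vec_eq_iff)
lemma wedge_swap: "wedge v w = - wedge w v"
  unfolding wedge_def by (simp add: vec_eq_iff)
lemma wedge_self: "wedge v v = 0"
  unfolding wedge_def by (simp add: vec_eq_iff mult.commute)


lemma dim_ker1:
  fixes L :: "('a::field^'n) set" and f :: "'a^'n \<Rightarrow> 'a"
  assumes L: "vec.subspace L"
    and fadd: "\<And>X Y. f (X + Y) = f X + f Y" and fsc: "\<And>c X. f (c *s X) = c * f X"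
    and X0: "X0 \<in> L" "f X0 \<noteq> 0"
  shows "vec.dim (L \<inter> {X. f X = 0}) + 1 = vec.dim L"
proof -
  let ?K = "L \<inter> {X. f X = 0}"
  have f0: "f 0 = 0" using fsc[of 0 0] by simp
  have K: "vec.subspace ?K"
    using L unfolding vec.subspace_def by (auto simp: fadd fsc f0)
  obtain B where B: "B \<subseteq> ?K" "vec.independent B" "?K \<subseteq> vec.span B" "card B = vec.dim ?K"
    using vec.basis_exists by blast
  have fin: "finite B" using B(2) vec.independent_bound_general by blast
  have spB: "vec.span B \<subseteq> ?K" using vec.span_minimal[OF B(1) K] .
  have nin: "X0 \<notin> vec.span B" using spB X0 by auto
  have ind: "vec.independent (insert X0 B)"
    using vec.independent_insertI[OF nin B(2)] .
  have sub: "insert X0 B \<subseteq> L" using B(1) X0 by auto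
  have sp: "L \<subseteq> vec.span (insert X0 B)"
  proof
    fix X assume X: "X \<in> L"
    let ?c = "f X / f X0"
    have e: "X - ?c *s X0 = X + (- ?c) *s X0" by (simp add: vec.scale_minus_left)
    have "X + (- ?c) *s X0 \<in> L" using X X0 L unfolding vec.subspace_def by blast
    moreover have "f (X + (- ?c) *s X0) = f X + (- ?c) * f X0" by (simp only: fadd fsc)
    then have "f (X + (- ?c) *s X0) = 0" using X0 by simp
    ultimately have "X - ?c *s X0 \<in> ?K" unfolding e by blast
    then have "X - ?c *s X0 \<in> vec.span B" using B(3) by auto
    then show "X \<in> vec.span (insert X0 B)" unfolding vec.span_insert mem_Collect_eq by (rule exI[of _ ?c])
  qed
  have X0B: "X0 \<notin> B" using nin vec.span_base by blast
  have d: "vec.dim L = card (insert X0 B)"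
    using vec.dim_unique[OF sub sp ind refl] .
  have c: "card (insert X0 B) = Suc (card B)" using fin X0B by (rule card_insert_disjoint)
  show ?thesis using d c B(4) by linarith
qed



lemma ifmul: "(if P then 1 else 0) * (y::'a::semiring_1) = (if P then y else 0)" by simp

lemma dim_ker2:
  fixes L :: "('a::field^'n) set" and f g :: "'a^'n \<Rightarrow> 'a"
  assumes L: "vec.subspace L"
    and fadd: "\<And>X Y. f (X + Y) = f X + f Y" and fsc: "\<And>c X. f (c *s X) = c * f X"
    and gadd: "\<And>X Y. g (X + Y) = g X + g Y" and gsc: "\<And>c X. g (c *s X) = c * g X"
    and nd: "\<And>a b. (a, b) \<noteq> (0, 0) \<Longrightarrow> \<exists>X\<in>L. a * f X + b * g X \<noteq> 0"
  shows "vec.dim (L \<inter> {X. f X = 0} \<inter> {X. g X = 0}) + 2 = vec.dim L"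
proof -
  obtain X0 where X0: "X0 \<in> L" "f X0 \<noteq> 0" using nd[of 1 0] by auto
  have "(g X0, - f X0) \<noteq> (0, 0)" using X0 by auto
  then obtain Y where Y: "Y \<in> L" "g X0 * f Y + (- f X0) * g Y \<noteq> 0" using nd by blast
  define Z where "Z = f X0 *s Y + (- f Y) *s X0"
  have f0: "f 0 = 0" using fsc[of 0 0] by simp
  have ZL: "Z \<in> L" unfolding Z_def using L X0 Y unfolding vec.subspace_def by blast
  have fZ: "f Z = 0" unfolding Z_def by (simp only: fadd fsc) (simp add: algebra_simps)
  have gZ: "g Z \<noteq> 0"
  proof -
    have "g Z = f X0 * g Y + (- f Y) * g X0" unfolding Z_def by (simp only: gadd gsc)
    also have "\<dots> = - (g X0 * f Y + (- f X0) * g Y)" by (simp add: algebra_simps)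
    finally show ?thesis using Y(2) by simp
  qed
  let ?K = "L \<inter> {X. f X = 0}"
  have K: "vec.subspace ?K"
    using L unfolding vec.subspace_def by (auto simp: fadd fsc f0)
  have 1: "vec.dim ?K + 1 = vec.dim L" by (rule dim_ker1[OF L fadd fsc X0])
  have 2: "vec.dim (?K \<inter> {X. g X = 0}) + 1 = vec.dim ?K"
    by (rule dim_ker1[OF K gadd gsc]) (use ZL fZ gZ in auto)
  show ?thesis using 1 2 by simp
qed

lemma iso_rank:
  fixes M :: "'a::field^'n^'n" and V :: "('a^'n) set"
  assumes V: "vec.subspace V" and d: "vec.dim V + 1 = CARD('n)"
    and iso: "\<forall>v\<in>V. \<forall>w\<in>V. (\<Sum>i\<in>UNIV. \<Sum>j\<in>UNIV. v$i * M$i$j * w$j) = 0"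
  shows "rank M \<le> 2"
proof -
  define bil where "bil v w = (\<Sum>i\<in>UNIV. \<Sum>j\<in>UNIV. v$i * M$i$j * w$j)" for v w :: "'a^'n"
  define u where "u v = (\<chi> j. \<Sum>i\<in>UNIV. v$i * M$i$j)" for v :: "'a^'n"
  have bil_add: "bil v (x + y) = bil v x + bil v y" for v x y
    unfolding bil_def by (simp add: distrib_left sum.distrib)
  have bil_sc: "bil v (c *s x) = c * bil v x" for v c x
    unfolding bil_def by (simp add: sum_distrib_left mult_ac)
  have u_bil: "u v $ j = bil v (axis j 1)" for v j
    unfolding u_def bil_def by (simp add: axis_def if_distrib cong: if_cong)
  have u_add: "u (x + y) = u x + u y" for x y
    unfolding u_def by (simp add: vec_eq_iff distrib_right sum.distrib)
  have u_sc: "u (c *s x) = c *s u x" for c x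
    unfolding u_def by (simp add: vec_eq_iff sum_distrib_left mult_ac)
  have u_row: "u (axis i 1) = M$i" for i
    unfolding u_def by (simp add: vec_eq_iff axis_def ifmul)
  have spV: "vec.span V = V" using V by simp
  have "\<exists>k. axis k (1::'a) \<notin> V"
  proof (rule ccontr)
    assume "\<not> (\<exists>k. axis k (1::'a) \<notin> V)"
    then have ax: "axis i 1 \<in> V" for i by blast
    have "x \<in> V" for x :: "'a^'n"
    proof -
      have "(\<Sum>i\<in>UNIV. x$i *s axis i 1) \<in> vec.span V"
        by (intro vec.span_sum vec.span_scale vec.span_base ax)
      then show ?thesis using basis_expansion[of x] spV by simp
    qed
    then have "V = UNIV" by blast
    then show False using d vec_dim_card[where 'a='a and 'n='n] by simp
  qed
  then obtain k where k: "axis k (1::'a) \<notin> V" by blast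
  define e where "e = axis k (1::'a)"
  obtain B where B: "B \<subseteq> V" "vec.independent B" "V \<subseteq> vec.span B" "card B = vec.dim V"
    using vec.basis_exists by blast
  have fin: "finite B" using B(2) vec.independent_bound_general by blast
  have spB: "vec.span B = V" using vec.span_minimal[OF B(1) V] B(3) by blast
  have eB: "e \<notin> vec.span B" using k spB e_def by simp
  have ind: "vec.independent (insert e B)" using vec.independent_insertI[OF eB B(2)] .
  have eB': "e \<notin> B" using eB vec.span_base by blast
  have card: "card (insert e B) = vec.dim (UNIV :: ('a^'n) set)"
    using fin eB' B(4) d vec_dim_card[where 'a='a and 'n='n] by simp
  have full: "UNIV \<subseteq> vec.span (insert e B)"
    using vec.card_eq_dim[of "insert e B" UNIV] card fin ind by simp
  have dec: "\<exists>t. x - t *s e \<in> V" for x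
  proof -
    have "x \<in> vec.span (insert e B)" using full by blast
    then show ?thesis unfolding vec.span_insert spB by blast
  qed
  then have "\<forall>j. \<exists>c. axis j 1 - c *s e \<in> V" by blast
  then have "\<exists>t. \<forall>j. axis j 1 - t j *s e \<in> V" by (rule choice)
  then obtain t where t: "\<And>j. axis j 1 - t j *s e \<in> V" by blast
  define tau where "tau = (\<chi> j. t j)"
  have uV: "u v = (u v $ k) *s tau" if v: "v \<in> V" for v
  proof -
    have "u v $ j = t j * u v $ k" for j
    proof -
      have eq: "axis j 1 = (axis j 1 - t j *s e) + t j *s e" by simp
      have "bil v (axis j 1 - t j *s e) = 0" using iso v t unfolding bil_def by blast
      then have "bil v (axis j 1) = t j * bil v e"
        by (subst eq, simp only: bil_add bil_sc) simp
      then show ?thesis by (simp add: u_bil e_def)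
    qed
    note h = this
    show ?thesis
    proof (rule vec_eq_iff[THEN iffD2], rule allI)
      fix j
      show "u v $ j = (u v $ k *s tau) $ j" unfolding h[of j] tau_def by (simp add: mult.commute)
    qed
  qed
  have rows_sub: "rows M \<subseteq> vec.span {tau, u e}"
  proof
    fix r assume "r \<in> rows M"
    then obtain i where r: "r = row i M" unfolding rows_def by blast
    have rM: "r = M$i" unfolding r row_def by (simp add: vec_eq_iff)
    have eq: "axis i 1 = (axis i 1 - t i *s e) + t i *s e" by simp
    have "M$i = u (axis i 1 - t i *s e) + t i *s u e"
      unfolding u_row[symmetric] by (subst eq, simp only: u_add u_sc)
    also have "\<dots> = (u (axis i 1 - t i *s e) $ k) *s tau + t i *s u e"
      using uV[OF t[of i]] by simp
    finally have "M$i = (u (axis i 1 - t i *s e) $ k) *s tau + t i *s u e" .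
    moreover have "(u (axis i 1 - t i *s e) $ k) *s tau + t i *s u e \<in> vec.span {tau, u e}"
      by (intro vec.span_add vec.span_scale vec.span_base) auto
    ultimately show "r \<in> vec.span {tau, u e}" using rM by simp
  qed
  have "rank M \<le> card {tau, u e}"
    unfolding row_rank_def_gen by (rule vec.dim_le_card[OF rows_sub]) simp
  also have "\<dots> \<le> 2" by (simp add: card_insert_if)
  finally show ?thesis .
qed


lemma wedge_add2: "wedge v (x + y) = wedge v x + wedge v y"
  unfolding wedge_def by (simp add: vec_eq_iff algebra_simps)
lemma wedge_scale2: "wedge v (c *s x) = c *s wedge v x"
  unfolding wedge_def by (simp add: vec_eq_iff algebra_simps)
lemma wedge_zero2: "wedge v 0 = 0"
  unfolding wedge_def by (simp add: vec_eq_iff)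

lemma dual_indep:
  fixes w :: "'i \<Rightarrow> 'a::field^'m" and Q :: "'i \<Rightarrow> 'a^'m"
  assumes fin: "finite I"
    and dl: "\<And>i j. i \<in> I \<Longrightarrow> j \<in> I \<Longrightarrow> (\<Sum>p\<in>UNIV. Q i $ p * w j $ p) = (if i = j then 1 else 0)"
  shows "vec.independent (w ` I)" "inj_on w I"
proof -
  show inj: "inj_on w I"
  proof (rule inj_onI)
    fix i j assume ij: "i \<in> I" "j \<in> I" "w i = w j"
    have "(if i = j then 1 else 0) = (\<Sum>p\<in>UNIV. Q i $ p * w j $ p)" by (rule dl[OF ij(1,2), symmetric])
    also have "\<dots> = (\<Sum>p\<in>UNIV. Q i $ p * w i $ p)" using ij by simp
    also have "\<dots> = (1::'a)" using dl[OF ij(1) ij(1)] by simp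
    finally show "i = j" by (metis zero_neq_one)
  qed
  show "vec.independent (w ` I)"
  proof (rule vec.independent_if_scalars_zero)
    show "finite (w ` I)" using fin by simp
    fix c x assume s: "(\<Sum>x\<in>w ` I. c x *s x) = 0" and x: "x \<in> w ` I"
    then obtain i where i: "i \<in> I" "x = w i" by blast
    have s2: "(\<Sum>j\<in>I. c (w j) *s w j) = 0" using s sum.reindex[OF inj, of "\<lambda>x. c x *s x"] by simp
    have "0 = (\<Sum>p\<in>UNIV. Q i $ p * (\<Sum>j\<in>I. c (w j) *s w j) $ p)" unfolding s2 by simp
    also have "\<dots> = (\<Sum>p\<in>UNIV. \<Sum>j\<in>I. c (w j) * (Q i $ p * w j $ p))"
      by (simp add: sum_component sum_distrib_left mult_ac)
    also have "\<dots> = (\<Sum>j\<in>I. c (w j) * (\<Sum>p\<in>UNIV. Q i $ p * w j $ p))"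
      by (subst sum.swap) (simp add: sum_distrib_left)
    also have "\<dots> = (\<Sum>j\<in>I. c (w j) * (if i = j then 1 else 0))"
      by (rule sum.cong[OF refl]) (simp add: dl i(1))
    also have "\<dots> = c (w i)" using fin i(1) by (simp add: if_distrib cong: if_cong)
    finally show "c x = 0" using i by simp
  qed
qed



lemma lt4: "(l::nat) < 4 \<Longrightarrow> l = 0 \<or> l = 1 \<or> l = 2 \<or> l = 3" by arith

lemma dim_Lambda2:
  fixes V :: "(complex^5) set"
  assumes V: "vec.subspace V" and d: "vec.dim V = 4"
  shows "vec.dim (Lambda2 V) = 6"
proof -
  obtain B where B: "B \<subseteq> V" "vec.independent B" "V \<subseteq> vec.span B" "card B = 4"
    using vec.basis_exists d by metis
  have finB: "finite B" using B(2) vec.independent_bound_general by blast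
  obtain b where bij: "bij_betw b {0..<(4::nat)} B" using ex_bij_betw_nat_finite[OF finB] B(4) by metis
  have bB: "b l \<in> B" if "l < 4" for l using bij that unfolding bij_betw_def by auto
  have Bb: "B = b ` {0..<(4::nat)}" using bij unfolding bij_betw_def by auto
  have binj: "b k = b l \<longleftrightarrow> k = l" if "k < 4" "l < 4" for k l
    using bij that unfolding bij_betw_def inj_on_def by auto
  have spB: "vec.span B = V" using vec.span_minimal[OF B(1) V] B(3) by blast
  have "\<forall>k. \<exists>g. Vector_Spaces.linear (*s) (*s) g \<and> (\<forall>x\<in>B. g x = (if x = b k then (\<chi> i. 1) else (0::complex^5)))"
    by (intro allI vec.linear_independent_extend[OF B(2)])
  then obtain G where G: "\<And>k. Vector_Spaces.linear (*s) (*s) (G k)"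
    "\<And>k x. x \<in> B \<Longrightarrow> G k x = (if x = b k then (\<chi> i. 1) else (0::complex^5))"
    by metis
  define phi where "phi k x = G k x $ undefined" for k x
  have phi_b: "phi k (b l) = (if k = l then 1 else 0)" if "k < 4" "l < 4" for k l
    unfolding phi_def using G(2)[OF bB[OF that(2)], of k] binj[OF that] by auto
  have phi_exp: "phi k x = (\<Sum>i\<in>UNIV. x$i * phi k (axis i 1))" for k x
  proof -
    have "G k x = G k (\<Sum>i\<in>UNIV. x$i *s axis i 1)" by (simp add: basis_expansion)
    also have "\<dots> = (\<Sum>i\<in>UNIV. x$i *s G k (axis i 1))"
      by (simp add: vec.linear_sum[OF G(1)] vec.linear_scale[OF G(1)])
    finally show ?thesis unfolding phi_def by (simp add: sum_component)
  qed
  define W where "W p = wedge (b (fst p)) (b (snd p))" for p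
  define I where "I = {(0::nat,1::nat),(0,2),(0,3),(1,2),(1,3),(2,3)}"
  have I_mem: "fst p < snd p \<and> snd p < 4" if "p \<in> I" for p using that unfolding I_def by auto
  have I_memI: "(k, l) \<in> I" if "k < l" "l < 4" for k l
    using that lt4[of l] lt4[of k] unfolding I_def by auto
  have cardI: "card I = 6" unfolding I_def by simp
  define Q where "Q p = (\<chi> q. phi (fst p) (axis (fst q) 1) * phi (snd p) (axis (snd q) 1))" for p :: "nat \<times> nat"
  have Qw: "(\<Sum>q\<in>UNIV. Q p $ q * wedge v w $ q) = phi (fst p) v * phi (snd p) w - phi (fst p) w * phi (snd p) v" for p v w
  proof -
    let ?a = "\<lambda>i. phi (fst p) (axis i 1)" and ?c = "\<lambda>j. phi (snd p) (axis j 1)"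
    have "(\<Sum>q\<in>UNIV. Q p $ q * wedge v w $ q) = (\<Sum>q\<in>UNIV \<times> UNIV. ?a (fst q) * ?c (snd q) * (v$(fst q) * w$(snd q) - w$(fst q) * v$(snd q)))"
      unfolding Q_def wedge_def by (simp add: UNIV_Times_UNIV)
    also have "\<dots> = (\<Sum>i\<in>UNIV. \<Sum>j\<in>UNIV. ?a i * ?c j * (v$i * w$j - w$i * v$j))"
      by (simp add: sum.cartesian_product case_prod_beta)
    also have "\<dots> = (\<Sum>i\<in>UNIV. \<Sum>j\<in>UNIV. (v$i * ?a i) * (w$j * ?c j)) - (\<Sum>i\<in>UNIV. \<Sum>j\<in>UNIV. (w$i * ?a i) * (v$j * ?c j))"
      by (simp add: algebra_simps sum_subtractf)
    also have "\<dots> = phi (fst p) v * phi (snd p) w - phi (fst p) w * phi (snd p) v"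
      by (simp add: phi_exp[of "fst p" v] phi_exp[of "snd p" w] phi_exp[of "fst p" w] phi_exp[of "snd p" v] sum_product)
    finally show ?thesis .
  qed
  have dl: "(\<Sum>q\<in>UNIV. Q p $ q * W p' $ q) = (if p = p' then 1 else 0)" if "p \<in> I" "p' \<in> I" for p p'
  proof -
    have m: "fst p < snd p" "snd p < 4" "fst p' < snd p'" "snd p' < 4" using I_mem that by auto
    have "(\<Sum>q\<in>UNIV. Q p $ q * W p' $ q) = phi (fst p) (b (fst p')) * phi (snd p) (b (snd p')) - phi (fst p) (b (snd p')) * phi (snd p) (b (fst p'))"
      unfolding W_def by (rule Qw)
    also have "\<dots> = (if p = p' then 1 else 0)"
      using m by (simp add: phi_b prod_eq_iff)
    finally show ?thesis .
  qed
  have ind: "vec.independent (W ` I)" and injW: "inj_on W I"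
    using dual_indep[of I Q W] dl unfolding I_def by auto
  have cardW: "card (W ` I) = 6" using card_image[OF injW] cardI by simp
  have sub: "W ` I \<subseteq> Lambda2 V"
  proof
    fix X assume "X \<in> W ` I"
    then obtain p where p: "p \<in> I" "X = W p" by blast
    have "b (fst p) \<in> V" "b (snd p) \<in> V" using I_mem[OF p(1)] bB B(1) by auto
    then show "X \<in> Lambda2 V" unfolding Lambda2_def p W_def by (intro vec.span_base) blast
  qed
  let ?S = "vec.span (W ` I)"
  have base: "wedge x y \<in> ?S" if "x \<in> B" "y \<in> B" for x y
  proof -
    have xy: "x \<in> b ` {0..<(4::nat)}" "y \<in> b ` {0..<(4::nat)}" using that Bb by auto
    then obtain k l where kl: "k < 4" "l < 4" "x = b k" "y = b l" by (metis atLeastLessThan_iff imageE)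
    consider "k < l" | "k = l" | "l < k" by arith
    then show ?thesis
    proof cases
      case 1 then show ?thesis using kl I_memI[of k l] unfolding W_def
        by (intro vec.span_base) (auto intro!: image_eqI[where x="(k,l)"])
    next
      case 2 then show ?thesis using kl by (simp add: wedge_self vec.span_zero)
    next
      case 3
      have "wedge (b l) (b k) \<in> ?S" using kl 3 I_memI[of l k] unfolding W_def
        by (intro vec.span_base) (auto intro!: image_eqI[where x="(l,k)"])
      then show ?thesis using kl wedge_swap[of "b k" "b l"] vec.span_neg by fastforce
    qed
  qed
  have step1: "wedge x y \<in> ?S" if "x \<in> V" "y \<in> B" for x y
  proof -
    have "vec.subspace {x. wedge x y \<in> ?S}"
      unfolding vec.subspace_def
      by (auto simp: wedge_add1 wedge_scale1 wedge_zero1 intro: vec.span_add vec.span_scale vec.span_zero)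
    then have "vec.span B \<subseteq> {x. wedge x y \<in> ?S}"
      using base that(2) by (intro vec.span_minimal) auto
    then show ?thesis using that(1) spB by auto
  qed
  have step2: "wedge x y \<in> ?S" if "x \<in> V" "y \<in> V" for x y
  proof -
    have "vec.subspace {y. wedge x y \<in> ?S}"
      unfolding vec.subspace_def
      by (auto simp: wedge_add2 wedge_scale2 wedge_zero2 intro: vec.span_add vec.span_scale vec.span_zero)
    then have "vec.span B \<subseteq> {y. wedge x y \<in> ?S}"
      using step1 that(1) by (intro vec.span_minimal) auto
    then show ?thesis using that(2) spB by auto
  qed
  have sp: "Lambda2 V \<subseteq> ?S"
    unfolding Lambda2_def using step2 by (intro vec.span_minimal) auto
  show ?thesis using vec.dim_unique[OF sub sp ind cardW] .
qed

theorem lemma3p1: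
  fixes A1 A2 :: "complex^5^5"
  assumes "skew A1" and "skew A2"
    and "\<forall>a b. (a, b) \<noteq> (0, 0) \<longrightarrow> rank (lincomb a A1 b A2) = 4"
  shows "\<forall>V4 :: (complex^5) set. vec.subspace V4 \<and> vec.dim V4 = 4 \<longrightarrow>
           vec.dim (Lambda2 V4 \<inter> hyperplane_of A1 \<inter> hyperplane_of A2) = 4"
proof (intro allI impI)
  fix V4 :: "(complex^5) set"
  assume h: "vec.subspace V4 \<and> vec.dim V4 = 4"
  let ?L = "Lambda2 V4"
  have L: "vec.subspace ?L" unfolding Lambda2_def by simp
  have dimL: "vec.dim ?L = 6" by (rule dim_Lambda2) (use h in auto)
  have nd: "\<exists>X\<in>?L. a * pairing A1 X + b * pairing A2 X \<noteq> 0" if ab: "(a, b) \<noteq> (0, 0)" for a b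
  proof -
    let ?M = "lincomb a A1 b A2"
    have sk: "skew ?M" by (rule skew_lincomb[OF assms(1,2)])
    have r: "rank ?M = 4" using assms(3) ab by blast
    have "\<not> (\<forall>v\<in>V4. \<forall>w\<in>V4. (\<Sum>i\<in>UNIV. \<Sum>j\<in>UNIV. v$i * ?M$i$j * w$j) = 0)"
    proof
      assume iso: "\<forall>v\<in>V4. \<forall>w\<in>V4. (\<Sum>i\<in>UNIV. \<Sum>j\<in>UNIV. v$i * ?M$i$j * w$j) = 0"
      have "rank ?M \<le> 2" by (rule iso_rank[OF _ _ iso]) (use h in auto)
      then show False using r by simp
    qed
    then obtain v w where vw: "v \<in> V4" "w \<in> V4" "(\<Sum>i\<in>UNIV. \<Sum>j\<in>UNIV. v$i * ?M$i$j * w$j) \<noteq> 0"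
      by blast
    have X: "wedge v w \<in> ?L" unfolding Lambda2_def using vw by (intro vec.span_base) blast
    have "a * pairing A1 (wedge v w) + b * pairing A2 (wedge v w) = pairing ?M (wedge v w)"
      by (simp add: pairing_lincomb)
    also have "\<dots> \<noteq> 0" using vw(3) pairing_wedge[OF sk] by simp
    finally show ?thesis using X by blast
  qed
  have D: "vec.dim (?L \<inter> {X. pairing A1 X = 0} \<inter> {X. pairing A2 X = 0}) + 2 = vec.dim ?L"
    by (rule dim_ker2[OF L pairing_add pairing_scale pairing_add pairing_scale nd])
  have sub: "?L \<subseteq> Lambda2 UNIV" unfolding Lambda2_def by (rule vec.span_mono) blast
  have eq: "?L \<inter> hyperplane_of A1 \<inter> hyperplane_of A2 = ?L \<inter> {X. pairing A1 X = 0} \<inter> {X. pairing A2 X = 0}"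
    unfolding hyperplane_of_def using sub by blast
  show "vec.dim (?L \<inter> hyperplane_of A1 \<inter> hyperplane_of A2) = 4"
    unfolding eq using D dimL by simp
qed

end
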